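(* Let $P$ be an orthogonal projector on $\mathcal H$. The subspace $P\mathcal H$ is lazy, i.e. for every $\rho\in\mathbf S$ with $\rho=P\rho P$ one has $\frac{d}{dt}\mathrm{Tr}[P\,\mathcal T^t(\rho)\,P]\big|_{t=0}=0$, if and only if $h_\alpha P=Ph_\alpha P$ for every $\alpha$.
   Context: Let $\mathcal H$ be a finite-dimensional complex Hilbert space, $H=H^\dagger$ and $\{h_\alpha\}$ a finite family of operators on $\mathcal H$, $\mathcal D(\rho)=-i[H,\rho]+\sum_\alpha(h_\alpha\rho h_\alpha^\dagger-\tfrac12(h_\alpha^\dagger h_\alpha\rho+\rho h_\alpha^\dagger h_\alpha))$, $\mathcal T^t=e^{t\mathcal D}$. $\mathbf S$ is the set of density matrices. *)

theory Defs
  imports "HOL-Analysis.Analysis"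
begin

text \<open>Operators on the finite-dimensional Hilbert space C^n, n = CARD('n),
  are represented as complex n x n matrices of type complex^'n^'n.\<close>

definition cadj :: "complex^'n^'n \<Rightarrow> complex^'n^'n" where
  "cadj A = (\<chi> i j. cnj (A $ j $ i))"

definition csmat :: "complex \<Rightarrow> complex^'n^'n \<Rightarrow> complex^'n^'n" where
  "csmat c A = (\<chi> i j. c * A $ i $ j)"

definition cinner :: "complex^'n \<Rightarrow> complex^'n \<Rightarrow> complex" where
  "cinner x y = (\<Sum>i\<in>UNIV. cnj (x $ i) * y $ i)"

definition density_matrix :: "complex^'n^'n \<Rightarrow> bool" where
  "density_matrix \<rho> \<longleftrightarrow>
     (\<forall>x. Im (cinner x (\<rho> *v x)) = 0 \<and> 0 \<le> Re (cinner x (\<rho> *v x))) \<and> trace \<rho> = 1"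

definition orth_proj :: "complex^'n^'n \<Rightarrow> bool" where
  "orth_proj P \<longleftrightarrow> P ** P = P \<and> cadj P = P"

definition lindblad ::
  "complex^'n^'n \<Rightarrow> ('a \<Rightarrow> complex^'n^'n) \<Rightarrow> 'a set \<Rightarrow> complex^'n^'n \<Rightarrow> complex^'n^'n" where
  "lindblad H h A \<rho> =
     csmat (- \<i>) (H ** \<rho> - \<rho> ** H)
     + (\<Sum>\<alpha>\<in>A. h \<alpha> ** \<rho> ** cadj (h \<alpha>)
          - csmat (1/2) (cadj (h \<alpha>) ** h \<alpha> ** \<rho> + \<rho> ** cadj (h \<alpha>) ** h \<alpha>))"

definition lindblad_semigroup ::
  "complex^'n^'n \<Rightarrow> ('a \<Rightarrow> complex^'n^'n) \<Rightarrow> 'a set \<Rightarrow> real \<Rightarrow> complex^'n^'n \<Rightarrow> complex^'n^'n" where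
  "lindblad_semigroup H h A t \<rho> =
     (\<Sum>k. (t ^ k / fact k) *\<^sub>R ((lindblad H h A ^^ k) \<rho>))"

end

theory Submission
  imports Defs
begin


lemma matrix_add_rdistrib': "((A + B) ** C) = (A ** C) + (B ** C)"
  by (vector matrix_matrix_mult_def sum.distrib[symmetric] field_simps)
lemma matrix_sub_ldistrib': "(A::'a::ring_1^'n^'m) ** (B - C) = A ** B - A ** C"
  by (vector matrix_matrix_mult_def sum_subtractf[symmetric] field_simps)
lemma matrix_sub_rdistrib': "((A::'a::ring_1^'n^'m) - B) ** C = A ** C - B ** C"
  by (vector matrix_matrix_mult_def sum_subtractf[symmetric] field_simps)
lemma csmat_mult_left: "csmat c A ** B = csmat c (A ** B)"
  by (simp add: csmat_def matrix_matrix_mult_def vec_eq_iff sum_distrib_left mult.assoc)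
lemma csmat_mult_right: "A ** csmat c B = csmat c (A ** B)"
  by (simp add: csmat_def matrix_matrix_mult_def vec_eq_iff sum_distrib_left mult_ac)
lemma csmat_add: "csmat c (A + B) = csmat c A + csmat c B"
  by (simp add: csmat_def vec_eq_iff algebra_simps)
lemma csmat_diff: "csmat c (A - B) = csmat c A - csmat c B"
  by (simp add: csmat_def vec_eq_iff algebra_simps)
lemma csmat_scaleR: "csmat c (r *\<^sub>R A) = r *\<^sub>R csmat c A"
  by (simp add: csmat_def vec_eq_iff scaleR_conv_of_real algebra_simps)
lemma trace_csmat: "trace (csmat c A) = c * trace A"
  by (simp add: trace_def csmat_def sum_distrib_left)
lemma trace_scaleR: "trace (r *\<^sub>R (A::complex^'n^'n)) = r *\<^sub>R trace A"
  by (simp add: trace_def scaleR_sum_right)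
lemma trace_zero: "trace (0::complex^'n^'n) = 0"
  by (simp add: trace_def)
lemma sum_mult_right: "(\<Sum>\<alpha>\<in>S. f \<alpha>) ** (B::'a::semiring_1^'n^'n) = (\<Sum>\<alpha>\<in>S. f \<alpha> ** B)"
  by (induction S rule: infinite_finite_induct) (auto simp: matrix_add_rdistrib')
lemma trace_sum: "trace (\<Sum>\<alpha>\<in>S. f \<alpha>) = (\<Sum>\<alpha>\<in>S. trace (f \<alpha> :: complex^'n^'n))"
  by (induction S rule: infinite_finite_induct) (auto simp: trace_add trace_zero)

lemma linear_lindblad: "linear (lindblad H h A)"
proof (rule linearI)
  fix x y show "lindblad H h A (x + y) = lindblad H h A x + lindblad H h A y"
    unfolding lindblad_def
    by (simp add: matrix_add_ldistrib matrix_add_rdistrib' csmat_add csmat_diff sum.distrib[symmetric] algebra_simps)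
next
  fix r :: real and x show "lindblad H h A (r *\<^sub>R x) = r *\<^sub>R lindblad H h A x"
    unfolding lindblad_def
    by (simp add: matrix_scalar_ac scalar_matrix_assoc[symmetric] csmat_add csmat_diff csmat_scaleR scaleR_sum_right scaleR_diff_right scaleR_add_right)
qed

lemma linear_phi: "linear (\<lambda>X::complex^'n^'n. trace (P ** X ** P))"
proof (rule linearI)
  fix x y :: "complex^'n^'n" show "trace (P ** (x + y) ** P) = trace (P ** x ** P) + trace (P ** y ** P)"
    by (simp add: matrix_add_ldistrib matrix_add_rdistrib' trace_add)
next
  fix r :: real and x :: "complex^'n^'n" show "trace (P ** (r *\<^sub>R x) ** P) = r *\<^sub>R trace (P ** x ** P)"
    by (simp add: matrix_scalar_ac scalar_matrix_assoc[symmetric] trace_scaleR)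
qed



lemma semigroup_deriv:
  fixes P H :: "complex^'n^'n" and h :: "'a \<Rightarrow> complex^'n^'n"
  shows "((\<lambda>t. trace (P ** lindblad_semigroup H h A t \<rho> ** P)) has_vector_derivative
      trace (P ** lindblad H h A \<rho> ** P)) (at 0 within S)"
proof -
  define L where "L = lindblad H h A"
  define \<phi> where "\<phi> = (\<lambda>X::complex^'n^'n. trace (P ** X ** P))"
  have blL: "bounded_linear L" unfolding L_def
    by (rule linear_conv_bounded_linear[THEN iffD1, OF linear_lindblad])
  have blp: "bounded_linear \<phi>" unfolding \<phi>_def
    by (rule linear_conv_bounded_linear[THEN iffD1, OF linear_phi])
  obtain KL where KL: "KL > 0" "\<And>x. norm (L x) \<le> norm x * KL"
    using bounded_linear.pos_bounded[OF blL] by blast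
  obtain Kp where Kp: "Kp > 0" "\<And>x. norm (\<phi> x) \<le> norm x * Kp"
    using bounded_linear.pos_bounded[OF blp] by blast
  have iter: "norm ((L^^k) x) \<le> norm x * KL^k" for k x
  proof (induction k)
    case 0 then show ?case by simp
  next
    case (Suc k)
    have "norm ((L^^Suc k) x) \<le> norm ((L^^k) x) * KL" using KL(2) by simp
    also have "\<dots> \<le> norm x * KL^k * KL" using Suc KL(1) by (simp add: mult_right_mono)
    finally show ?case by (simp add: mult_ac)
  qed
  define c where "c k = \<phi> ((L^^k) \<rho>) / of_real (fact k)" for k
  have sumT: "summable (\<lambda>k. (t^k / fact k) *\<^sub>R (L^^k) \<rho>)" for t :: real
  proof (rule summable_comparison_test)
    show "\<exists>N. \<forall>n\<ge>N. norm ((t^n / fact n) *\<^sub>R (L^^n) \<rho>) \<le> norm \<rho> * ((\<bar>t\<bar>*KL)^n / fact n)"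
    proof (intro exI allI impI)
      fix n :: nat
      have "norm ((t^n / fact n) *\<^sub>R (L^^n) \<rho>) = (\<bar>t\<bar>^n / fact n) * norm ((L^^n) \<rho>)"
        by (simp add: power_abs)
      also have "\<dots> \<le> (\<bar>t\<bar>^n / fact n) * (norm \<rho> * KL^n)"
        by (intro mult_left_mono iter) auto
      also have "\<dots> = norm \<rho> * ((\<bar>t\<bar>*KL)^n / fact n)" by (simp add: power_mult_distrib)
      finally show "norm ((t^n / fact n) *\<^sub>R (L^^n) \<rho>) \<le> norm \<rho> * ((\<bar>t\<bar>*KL)^n / fact n)" .
    qed
    show "summable (\<lambda>n. norm \<rho> * ((\<bar>t\<bar>*KL)^n / fact n))"
      using summable_exp by (intro summable_mult) (simp add: divide_inverse mult.commute)
  qed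
  have phiscale: "\<phi> (r *\<^sub>R X) = r *\<^sub>R \<phi> X" for r X
    unfolding \<phi>_def by (simp add: matrix_scalar_ac scalar_matrix_assoc[symmetric] trace_scaleR)
  have eq: "trace (P ** lindblad_semigroup H h A t \<rho> ** P) = (\<Sum>k. c k * (of_real t)^k)" for t :: real
  proof -
    have "trace (P ** lindblad_semigroup H h A t \<rho> ** P) = \<phi> (\<Sum>k. (t^k / fact k) *\<^sub>R (L^^k) \<rho>)"
      unfolding \<phi>_def L_def lindblad_semigroup_def ..
    also have "\<dots> = (\<Sum>k. \<phi> ((t^k / fact k) *\<^sub>R (L^^k) \<rho>))"
      by (rule bounded_linear.suminf[OF blp sumT])
    also have "\<dots> = (\<Sum>k. c k * (of_real t)^k)"
      unfolding phiscale by (simp add: c_def scaleR_conv_of_real field_simps)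
    finally show ?thesis .
  qed
  have summ: "summable (\<lambda>k. c k * y^k)" for y :: complex
  proof (rule summable_comparison_test)
    show "\<exists>N. \<forall>n\<ge>N. norm (c n * y^n) \<le> (Kp * norm \<rho>) * ((KL * norm y)^n / fact n)"
    proof (intro exI allI impI)
      fix n :: nat
      have "norm (c n * y^n) = norm (\<phi> ((L^^n) \<rho>)) / fact n * norm y ^ n"
        by (simp add: c_def norm_mult norm_divide norm_power)
      also have "\<dots> \<le> (norm \<rho> * KL^n * Kp) / fact n * norm y ^ n"
      proof -
        have "norm (\<phi> ((L^^n) \<rho>)) \<le> norm ((L^^n) \<rho>) * Kp" by (rule Kp(2))
        also have "\<dots> \<le> norm \<rho> * KL^n * Kp" using iter Kp(1) by (simp add: mult_right_mono)
        finally show ?thesis by (intro mult_right_mono divide_right_mono) auto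
      qed
      also have "\<dots> = (Kp * norm \<rho>) * ((KL * norm y)^n / fact n)" by (simp add: power_mult_distrib)
      finally show "norm (c n * y^n) \<le> (Kp * norm \<rho>) * ((KL * norm y)^n / fact n)" .
    qed
    show "summable (\<lambda>n. (Kp * norm \<rho>) * ((KL * norm y)^n / fact n))"
      using summable_exp by (intro summable_mult) (simp add: divide_inverse mult.commute)
  qed
  have D: "((\<lambda>y. \<Sum>k. c k * y^k) has_field_derivative (\<Sum>n. diffs c n * 0^n)) (at 0)"
    by (rule termdiffs_strong_converges_everywhere[OF summ])
  have D0: "(\<Sum>n. diffs c n * 0^n) = trace (P ** L \<rho> ** P)"
    by (simp add: powser_zero diffs_def c_def \<phi>_def)
  have "((\<lambda>t. (\<Sum>k. c k * (of_real t)^k)) has_vector_derivative trace (P ** L \<rho> ** P)) (at 0 within S)"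
    using has_vector_derivative_real_field[of "\<lambda>y. \<Sum>k. c k * y^k" _ 0] D D0 by simp
  then show ?thesis using eq unfolding L_def by simp
qed



lemma trace_PXP: "P ** P = P \<Longrightarrow> trace (P ** X ** P) = trace (X ** (P::complex^'n^'n))"
  by (metis matrix_mul_assoc trace_mul_sym)

lemma key:
  fixes P H \<rho> :: "complex^'n^'n" and h :: "'a \<Rightarrow> complex^'n^'n"
  assumes PP: "P ** P = P" and Pr: "P ** \<rho> = \<rho>" and rP: "\<rho> ** P = \<rho>"
  shows "trace (P ** lindblad H h A \<rho> ** P) =
    (\<Sum>\<alpha>\<in>A. trace (P ** h \<alpha> ** \<rho> ** cadj (h \<alpha>)) - trace (h \<alpha> ** \<rho> ** cadj (h \<alpha>)))"
proof -
  have expand: "trace (lindblad H h A \<rho> ** P) = - \<i> * (trace (H ** \<rho> ** P) - trace (\<rho> ** H ** P))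
     + (\<Sum>\<alpha>\<in>A. trace (h \<alpha> ** \<rho> ** cadj (h \<alpha>) ** P)
        - 1/2 * (trace (cadj (h \<alpha>) ** h \<alpha> ** \<rho> ** P) + trace (\<rho> ** cadj (h \<alpha>) ** h \<alpha> ** P)))"
    unfolding lindblad_def
    by (simp add: matrix_add_rdistrib' matrix_sub_rdistrib' csmat_mult_left sum_mult_right
        trace_add trace_sub trace_csmat trace_sum)
  have t1: "trace (H ** \<rho> ** P) = trace (\<rho> ** H ** P)"
    by (metis Pr matrix_mul_assoc rP trace_mul_sym)
  have a: "trace (g ** \<rho> ** cadj g ** P) = trace (P ** g ** \<rho> ** cadj g)" for g
    by (metis trace_mul_sym matrix_mul_assoc)
  have b: "trace (cadj g ** g ** \<rho> ** P) = trace (g ** \<rho> ** cadj g)" for g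
    by (metis rP trace_mul_sym matrix_mul_assoc)
  have c: "trace (\<rho> ** cadj g ** g ** P) = trace (g ** \<rho> ** cadj g)" for g
    by (metis Pr trace_mul_sym matrix_mul_assoc)
  show ?thesis unfolding trace_PXP[OF PP] expand t1 a b c by simp
qed



definition outer :: "complex^'n \<Rightarrow> complex^'n \<Rightarrow> complex^'n^'n" where
  "outer u w = (\<chi> i j. u$i * cnj (w$j))"

definition nrm :: "complex^'n \<Rightarrow> real" where
  "nrm y = (\<Sum>i\<in>UNIV. (cmod (y$i))^2)"

lemma outer_mult: "A ** outer u w ** cadj B = outer (A *v u) (B *v w)"
  by (simp add: outer_def cadj_def matrix_matrix_mult_def matrix_vector_mult_def vec_eq_iff
      sum_distrib_left sum_distrib_right mult_ac)

lemma trace_outer: "trace (outer u w) = cinner w u"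
  by (simp add: trace_def outer_def cinner_def mult.commute)

lemma cinner_cnj: "cinner x y = cnj (cinner y x)"
  by (simp add: cinner_def mult.commute)

lemma cinner_outer: "cinner x (outer v v *v x) = cnj (cinner v x) * cinner v x"
proof -
  have "cinner x (outer v v *v x) = cinner x v * cinner v x"
    apply (simp add: cinner_def outer_def matrix_vector_mult_def sum_distrib_left sum_distrib_right mult_ac)
    using sum.swap by fastforce
  then show ?thesis by (metis cinner_cnj)
qed

lemma cinner_self: "cinner y y = of_real (nrm y)"
  unfolding cinner_def nrm_def of_real_sum by (intro sum.cong refl) (metis complex_norm_square mult.commute)

lemma nrm_nonneg: "nrm y \<ge> 0"
  by (simp add: nrm_def sum_nonneg)

lemma nrm_zero: "nrm y = 0 \<Longrightarrow> y = 0"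
  unfolding nrm_def by (subst (asm) sum_nonneg_eq_0_iff) (auto simp: vec_eq_iff)

lemma cinner_adj: "cinner (A *v x) y = cinner x (cadj A *v y)"
  apply (simp add: cinner_def cadj_def matrix_vector_mult_def sum_distrib_left sum_distrib_right mult_ac)
  using sum.swap by fastforce

lemma cinner_diff_left: "cinner (x - y) z = cinner x z - cinner y z"
  by (simp add: cinner_def algebra_simps sum_subtractf)
lemma cinner_diff_right: "cinner z (x - y) = cinner z x - cinner z y"
  by (simp add: cinner_def algebra_simps sum_subtractf)

lemma proj_identity:
  assumes "orth_proj P"
  shows "cinner w (P *v w) - cinner w w = - cinner (w - P *v w) (w - P *v w)"
proof -
  have PP: "P ** P = P" and aP: "cadj P = P" using assms by (auto simp: orth_proj_def)
  have 1: "cinner (P *v w) w = cinner w (P *v w)" using cinner_adj[of P w w] aP by simp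
  have 2: "cinner (P *v w) (P *v w) = cinner w (P *v w)"
    using cinner_adj[of P w "P *v w"] aP PP by (simp add: matrix_vector_mul_assoc)
  show ?thesis by (simp add: cinner_diff_left cinner_diff_right 1 2)
qed

lemma mv_smult: "A *v (c *s x) = c *s (A *v (x::complex^'n))"
  by (simp add: matrix_vector_mult_def vec_eq_iff sum_distrib_left mult_ac)

lemma cinner_smult: "cinner (c *s x) (c *s x) = cnj c * c * cinner x x"
  by (simp add: cinner_def sum_distrib_left mult_ac)



lemma at0_nonbot: "at (0::real) within {0..} \<noteq> bot"
proof -
  have "{0::real..} - {0} = {0<..}" by auto
  then show ?thesis by (simp add: at_within_eq_bot_iff)
qed

theorem mainTheorem6:
  fixes H P :: "complex^'n^'n" and h :: "'a \<Rightarrow> complex^'n^'n" and A :: "'a set"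
  assumes "finite A" and "cadj H = H" and "orth_proj P"
  shows "(\<forall>\<rho>. density_matrix \<rho> \<and> \<rho> = P ** \<rho> ** P \<longrightarrow>
            ((\<lambda>t. trace (P ** lindblad_semigroup H h A t \<rho> ** P)) has_vector_derivative 0)
              (at 0 within {0..}))
         \<longleftrightarrow> (\<forall>\<alpha>\<in>A. h \<alpha> ** P = P ** h \<alpha> ** P)"
proof -
  have PP: "P ** P = P" and aP: "cadj P = P" using assms(3) by (auto simp: orth_proj_def)
  have deriv_iff: "((\<lambda>t. trace (P ** lindblad_semigroup H h A t \<rho> ** P)) has_vector_derivative 0)
              (at 0 within {0..}) \<longleftrightarrow> trace (P ** lindblad H h A \<rho> ** P) = 0" for \<rho>
    using semigroup_deriv[of P H h A \<rho> "{0..}"] vector_derivative_unique_within[OF at0_nonbot]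
    by metis
  have PR: "P ** \<rho> = \<rho>" "\<rho> ** P = \<rho>" if "\<rho> = P ** \<rho> ** P" for \<rho>
  proof -
    have "P ** \<rho> = P ** (P ** \<rho> ** P)" using that by simp
    also have "\<dots> = P ** \<rho> ** P" by (simp add: matrix_mul_assoc PP)
    finally show "P ** \<rho> = \<rho>" using that by simp
    have "\<rho> ** P = (P ** \<rho> ** P) ** P" using that by simp
    also have "\<dots> = P ** \<rho> ** P" by (simp add: matrix_mul_assoc[symmetric] PP)
    finally show "\<rho> ** P = \<rho>" using that by simp
  qed
  show ?thesis unfolding deriv_iff
  proof
    assume R: "\<forall>\<alpha>\<in>A. h \<alpha> ** P = P ** h \<alpha> ** P"
    show "\<forall>\<rho>. density_matrix \<rho> \<and> \<rho> = P ** \<rho> ** P \<longrightarrow> trace (P ** lindblad H h A \<rho> ** P) = 0"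
    proof (intro allI impI)
      fix \<rho> :: "complex^'n^'n" assume "density_matrix \<rho> \<and> \<rho> = P ** \<rho> ** P"
      then have Pr: "P ** \<rho> = \<rho>" and rP: "\<rho> ** P = \<rho>" using PR by auto
      have "P ** h \<alpha> ** \<rho> = h \<alpha> ** \<rho>" if "\<alpha> \<in> A" for \<alpha>
      proof -
        have "P ** h \<alpha> ** \<rho> = P ** h \<alpha> ** P ** \<rho>" using Pr by (simp add: matrix_mul_assoc[symmetric])
        also have "\<dots> = h \<alpha> ** P ** \<rho>" using R that by simp
        also have "\<dots> = h \<alpha> ** \<rho>" using Pr by (simp add: matrix_mul_assoc[symmetric])
        finally show ?thesis .
      qed
      then show "trace (P ** lindblad H h A \<rho> ** P) = 0"
        unfolding key[OF PP Pr rP] by simp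
    qed
  next
    assume L: "\<forall>\<rho>. density_matrix \<rho> \<and> \<rho> = P ** \<rho> ** P \<longrightarrow> trace (P ** lindblad H h A \<rho> ** P) = 0"
    have main: "h \<alpha> *v y = P *v (h \<alpha> *v y)" if "\<alpha> \<in> A" "P *v y = y" for \<alpha> y
    proof (cases "y = 0")
      case True then show ?thesis by simp
    next
      case False
      define r where "r = nrm y"
      have r0: "r > 0" using False nrm_zero nrm_nonneg r_def by (metis order_le_less)
      define c where "c = complex_of_real (1 / sqrt r)"
      have c0: "c \<noteq> 0" using r0 by (simp add: c_def)
      define v where "v = c *s y"
      have "cinner v v = cnj c * c * of_real r"
        unfolding v_def cinner_smult by (simp only: cinner_self r_def)
      also have "\<dots> = of_real (1 / sqrt r * (1 / sqrt r) * r)" by (simp add: c_def del: of_real_mult add: of_real_mult[symmetric])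
      also have "\<dots> = 1" using r0 by (simp only: of_real_eq_1_iff) (simp add: field_simps)
      finally have vv: "cinner v v = 1" .
      have Pv: "P *v v = v" by (simp add: v_def mv_smult that(2))
      define \<rho> where "\<rho> = outer v v"
      have PrP: "P ** \<rho> ** P = \<rho>"
        using outer_mult[of P v v P] aP Pv by (simp add: \<rho>_def)
      have dens: "density_matrix \<rho>"
        unfolding density_matrix_def
      proof (intro conjI allI)
        fix x
        have e: "cinner x (\<rho> *v x) = of_real ((cmod (cinner v x))^2)"
          unfolding \<rho>_def cinner_outer by (metis complex_norm_square mult.commute)
        show "Im (cinner x (\<rho> *v x)) = 0" unfolding e by simp
        show "0 \<le> Re (cinner x (\<rho> *v x))" unfolding e by simp
      next
        show "trace \<rho> = 1" by (simp add: \<rho>_def trace_outer vv)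
      qed
      have Pr: "P ** \<rho> = \<rho>" and rP: "\<rho> ** P = \<rho>" using PR PrP by auto
      define u where "u \<beta> = h \<beta> *v v - P *v (h \<beta> *v v)" for \<beta>
      have tm: "trace (P ** h \<beta> ** \<rho> ** cadj (h \<beta>)) - trace (h \<beta> ** \<rho> ** cadj (h \<beta>)) = - of_real (nrm (u \<beta>))" for \<beta>
      proof -
        have "trace (P ** h \<beta> ** \<rho> ** cadj (h \<beta>)) = cinner (h \<beta> *v v) (P *v (h \<beta> *v v))"
          by (simp add: \<rho>_def outer_mult trace_outer matrix_vector_mul_assoc)
        moreover have "trace (h \<beta> ** \<rho> ** cadj (h \<beta>)) = cinner (h \<beta> *v v) (h \<beta> *v v)"
          by (simp add: \<rho>_def outer_mult trace_outer)
        ultimately show ?thesis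
          using proj_identity[OF assms(3), of "h \<beta> *v v"] by (simp add: u_def cinner_self)
      qed
      have "0 = trace (P ** lindblad H h A \<rho> ** P)" using L dens PrP by auto
      also have "\<dots> = - of_real (\<Sum>\<beta>\<in>A. nrm (u \<beta>))"
        unfolding key[OF PP Pr rP] tm by (simp add: sum_negf)
      finally have "- complex_of_real (\<Sum>\<beta>\<in>A. nrm (u \<beta>)) = 0" by (rule sym)
      then have "(\<Sum>\<beta>\<in>A. nrm (u \<beta>)) = 0" by (simp only: neg_equal_0_iff_equal of_real_eq_0_iff)
      then have "\<forall>\<beta>\<in>A. nrm (u \<beta>) = 0"
        using sum_nonneg_eq_0_iff[OF assms(1), of "\<lambda>\<beta>. nrm (u \<beta>)"] nrm_nonneg by blast
      then have "nrm (u \<alpha>) = 0" using that(1) by simp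
      then have "u \<alpha> = 0" by (rule nrm_zero)
      then have "c *s (h \<alpha> *v y) = c *s (P *v (h \<alpha> *v y))"
        unfolding u_def v_def mv_smult by simp
      then show ?thesis using c0 by (metis vector_mul_lcancel)
    qed
    show "\<forall>\<alpha>\<in>A. h \<alpha> ** P = P ** h \<alpha> ** P"
    proof
      fix \<alpha> assume a: "\<alpha> \<in> A"
      show "h \<alpha> ** P = P ** h \<alpha> ** P"
      proof (rule matrix_eq[THEN iffD2], intro allI)
        fix x
        have "P *v (P *v x) = P *v x" by (simp add: matrix_vector_mul_assoc PP)
        then show "(h \<alpha> ** P) *v x = (P ** h \<alpha> ** P) *v x"
          using main[OF a, of "P *v x"] by (metis matrix_vector_mul_assoc)
      qed
    qed
  qed
qed


end
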